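(* Let $X$ be a well-filtered coherent space. If $X$ is first-countable, then $X$ is sober.
   Context: Spaces are $T_0$; the specialization order is $x\le y$ iff $x\in\overline{\{y\}}$, and a subset is saturated if it is an upper set in this order. $X$ is well-filtered if for every filtered family $\mathcal F$ of compact saturated subsets and every open $U$, $\bigcap\mathcal F\subseteq U$ implies $F\subseteq U$ for some $F\in\mathcal F$. $X$ is coherent if the intersection of any two compact saturated subsets is compact. A $T_0$ space is sober if every irreducible closed set equals $\overline{\{x\}}$ for some point $x$. *)

theory Defs
  imports "HOL-Analysis.Analysis"
begin

definition spec_le :: "'a topology \<Rightarrow> 'a \<Rightarrow> 'a \<Rightarrow> bool" where
  "spec_le X x y \<longleftrightarrow> x \<in> topspace X \<and> y \<in> topspace X \<and> x \<in> X closure_of {y}"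

definition saturated_in :: "'a topology \<Rightarrow> 'a set \<Rightarrow> bool" where
  "saturated_in X K \<longleftrightarrow> K \<subseteq> topspace X \<and>
     (\<forall>x y. x \<in> K \<and> spec_le X x y \<longrightarrow> y \<in> K)"

definition compact_saturated_in :: "'a topology \<Rightarrow> 'a set \<Rightarrow> bool" where
  "compact_saturated_in X K \<longleftrightarrow> compactin X K \<and> saturated_in X K"

definition filtered_family :: "'a set set \<Rightarrow> bool" where
  "filtered_family \<F> \<longleftrightarrow> \<F> \<noteq> {} \<and>
     (\<forall>F1 \<in> \<F>. \<forall>F2 \<in> \<F>. \<exists>F3 \<in> \<F>. F3 \<subseteq> F1 \<inter> F2)"

definition well_filtered :: "'a topology \<Rightarrow> bool" where
  "well_filtered X \<longleftrightarrow>
     (\<forall>\<F> U. filtered_family \<F> \<and> (\<forall>K \<in> \<F>. compact_saturated_in X K) \<and> openin X U \<and>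
        \<Inter>\<F> \<subseteq> U \<longrightarrow> (\<exists>F \<in> \<F>. F \<subseteq> U))"

definition coherent_space :: "'a topology \<Rightarrow> bool" where
  "coherent_space X \<longleftrightarrow>
     (\<forall>K1 K2. compact_saturated_in X K1 \<and> compact_saturated_in X K2 \<longrightarrow> compactin X (K1 \<inter> K2))"

definition irreducible_closed :: "'a topology \<Rightarrow> 'a set \<Rightarrow> bool" where
  "irreducible_closed X A \<longleftrightarrow> closedin X A \<and> A \<noteq> {} \<and>
     (\<forall>B C. closedin X B \<and> closedin X C \<and> A \<subseteq> B \<union> C \<longrightarrow> A \<subseteq> B \<or> A \<subseteq> C)"

definition sober_space :: "'a topology \<Rightarrow> bool" where
  "sober_space X \<longleftrightarrow> t0_space X \<and>
     (\<forall>A. irreducible_closed X A \<longrightarrow> (\<exists>x \<in> topspace X. A = X closure_of {x}))"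

end

theory Submission
  imports Defs
begin

definition upc :: "'a topology \<Rightarrow> 'a set \<Rightarrow> 'a set" where
  "upc X S = {z \<in> topspace X. \<exists>s\<in>S. s \<in> X closure_of {z}}"

lemma in_cl1: "x \<in> X closure_of {y} \<longleftrightarrow> x \<in> topspace X \<and> (\<forall>U. openin X U \<and> x \<in> U \<longrightarrow> y \<in> U)"
  by (auto simp: in_closure_of)

lemma upc_sat: "saturated_in X (upc X S)"
  unfolding saturated_in_def spec_le_def upc_def in_cl1 by blast

lemma upc_compact:
  assumes "compactin X S" shows "compactin X (upc X S)"
  unfolding compactin_def
proof (intro conjI allI impI)
  show "upc X S \<subseteq> topspace X" by (auto simp: upc_def)
  fix \<U> assume H: "(\<forall>V\<in>\<U>. openin X V) \<and> upc X S \<subseteq> \<Union>\<U>"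
  have St: "S \<subseteq> topspace X" using assms compactin_subset_topspace by blast
  have "S \<subseteq> upc X S"
  proof
    fix s assume "s \<in> S"
    then have "s \<in> topspace X" using St by blast
    then have "s \<in> X closure_of {s}" by (simp add: in_cl1)
    then show "s \<in> upc X S" using \<open>s \<in> S\<close> \<open>s \<in> topspace X\<close> by (auto simp: upc_def)
  qed
  then have cov: "(\<forall>V\<in>\<U>. openin X V) \<and> S \<subseteq> \<Union>\<U>" using H by blast
  have "\<forall>U. (\<forall>V\<in>U. openin X V) \<and> S \<subseteq> \<Union>U \<longrightarrow> (\<exists>F. finite F \<and> F \<subseteq> U \<and> S \<subseteq> \<Union>F)"
    using assms by (simp add: compactin_def)
  then have "\<exists>F. finite F \<and> F \<subseteq> \<U> \<and> S \<subseteq> \<Union>F" using cov by blast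
  then obtain F where F: "finite F" "F \<subseteq> \<U>" "S \<subseteq> \<Union>F" by blast
  have "upc X S \<subseteq> \<Union>F"
  proof
    fix z assume "z \<in> upc X S"
    then obtain s where s: "s \<in> S" "s \<in> X closure_of {z}" by (auto simp: upc_def)
    then obtain V where "V \<in> F" "s \<in> V" using F by blast
    then have "openin X V" using F H by blast
    then have "z \<in> V" using s \<open>s \<in> V\<close> by (auto simp: in_cl1)
    then show "z \<in> \<Union>F" using \<open>V \<in> F\<close> by blast
  qed
  then show "\<exists>F. finite F \<and> F \<subseteq> \<U> \<and> upc X S \<subseteq> \<Union>F" using F by blast
qed

lemma upc_cs: "compactin X S \<Longrightarrow> compact_saturated_in X (upc X S)"
  by (simp add: compact_saturated_in_def upc_compact upc_sat)

lemma sat_Int: "saturated_in X A \<Longrightarrow> saturated_in X B \<Longrightarrow> saturated_in X (A \<inter> B)"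
  unfolding saturated_in_def by blast

lemma conv_compact:
  fixes s :: "nat \<Rightarrow> 'a"
  assumes a: "a \<in> topspace X" and st: "\<And>k. s k \<in> topspace X"
    and conv: "\<And>W. openin X W \<Longrightarrow> a \<in> W \<Longrightarrow> \<exists>N. \<forall>k\<ge>N. s k \<in> W"
  shows "compactin X (insert a (s ` {n..}))"
  unfolding compactin_def
proof (intro conjI allI impI)
  show "insert a (s ` {n..}) \<subseteq> topspace X" using a st by blast
  fix \<U> assume H: "(\<forall>V\<in>\<U>. openin X V) \<and> insert a (s ` {n..}) \<subseteq> \<Union>\<U>"
  then obtain W0 where W0: "W0 \<in> \<U>" "a \<in> W0" by blast
  have "openin X W0" using H W0 by blast
  then obtain N where N: "\<forall>k\<ge>N. s k \<in> W0" using conv[OF _ W0(2)] by blast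
  have "\<exists>V. n \<le> k \<longrightarrow> V \<in> \<U> \<and> s k \<in> V" for k
  proof (cases "n \<le> k")
    case True
    then have "s k \<in> \<Union>\<U>" using H by blast
    then show ?thesis by blast
  qed simp
  then have "\<forall>k. \<exists>V. n \<le> k \<longrightarrow> V \<in> \<U> \<and> s k \<in> V" by blast
  then obtain V where V: "\<And>k. n \<le> k \<Longrightarrow> V k \<in> \<U> \<and> s k \<in> V k" by metis
  let ?F = "insert W0 (V ` {n..<N})"
  have "finite ?F" by simp
  moreover have "?F \<subseteq> \<U>" using W0 V by auto
  moreover have "insert a (s ` {n..}) \<subseteq> \<Union>?F"
  proof
    fix x assume "x \<in> insert a (s ` {n..})"
    then consider "x = a" | k where "k \<ge> n" "x = s k" by auto
    then show "x \<in> \<Union>?F"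
    proof cases
      case 1 then show ?thesis using W0 by blast
    next
      case 2
      show ?thesis
      proof (cases "k \<ge> N")
        case True then show ?thesis using N 2 by blast
      next
        case False then have "k \<in> {n..<N}" using 2 by auto
        then show ?thesis using V[of k] 2 by blast
      qed
    qed
  qed
  ultimately show "\<exists>F. finite F \<and> F \<subseteq> \<U> \<and> insert a (s ` {n..}) \<subseteq> \<Union>F" by blast
qed

lemma fc_base:
  assumes "first_countable X" "a \<in> topspace X"
  obtains U :: "nat \<Rightarrow> 'a set" where "\<And>n. openin X (U n)" "\<And>n. a \<in> U n"
    "\<And>W. openin X W \<Longrightarrow> a \<in> W \<Longrightarrow> \<exists>j. \<forall>k\<ge>j. U k \<subseteq> W"
proof -
  obtain B where B: "countable B" "\<forall>V\<in>B. openin X V"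
    "\<forall>U. openin X U \<and> a \<in> U \<longrightarrow> (\<exists>V\<in>B. a \<in> V \<and> V \<subseteq> U)"
    using bspec[OF assms(1)[unfolded first_countable_def] assms(2)] by (elim exE conjE) blast
  define B' where "B' = {V \<in> B. a \<in> V}"
  have "openin X (topspace X) \<and> a \<in> topspace X" using assms(2) by simp
  then obtain V0 where "V0 \<in> B" "a \<in> V0" using B(3) by blast
  then have "V0 \<in> B'" by (simp add: B'_def)
  then have "B' \<noteq> {}" by blast
  have cB': "countable B'" using B(1) unfolding B'_def by simp
  define c where "c = from_nat_into B'"
  have rc: "range c = B'" unfolding c_def by (rule range_from_nat_into[OF \<open>B' \<noteq> {}\<close> cB'])
  have co: "openin X (c i) \<and> a \<in> c i" for i
  proof -
    have "c i \<in> B'" using rc by blast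
    then show ?thesis using B(2) unfolding B'_def by blast
  qed
  define U where "U n = \<Inter>(c ` {..n})" for n
  have UO: "openin X (U n)" for n
    unfolding U_def using co by (intro openin_Inter) auto
  have UA: "a \<in> U n" for n
    unfolding U_def using co by auto
  have UW:  "\<exists>j. \<forall>k\<ge>j. U k \<subseteq> W" if W: "openin X W" "a \<in> W" for W
  proof -
    obtain V where "V \<in> B" "a \<in> V" "V \<subseteq> W" using B(3) W by blast
    then have "V \<in> B'" by (simp add: B'_def)
    then obtain j where "c j = V" using rc by blast
    have "U k \<subseteq> W" if "k \<ge> j" for k
    proof -
      have "c j \<in> c ` {..k}" using that by simp
      then have "U k \<subseteq> c j" unfolding U_def by (rule Inter_lower)
      then show ?thesis using \<open>c j = V\<close> \<open>V \<subseteq> W\<close> by blast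
    qed
    then have "\<forall>k\<ge>j. U k \<subseteq> W" by blast
    then show ?thesis by blast
  qed
  show ?thesis by (rule that[OF UO UA UW])
qed


lemma upc_mono: "S \<subseteq> T \<Longrightarrow> upc X S \<subseteq> upc X T"
  unfolding upc_def by blast

lemma self_upc: "x \<in> topspace X \<Longrightarrow> x \<in> S \<Longrightarrow> x \<in> upc X S"
  unfolding upc_def by (auto simp: in_cl1)

lemma cl_trans: "x \<in> X closure_of {y} \<Longrightarrow> y \<in> X closure_of {z} \<Longrightarrow> x \<in> X closure_of {z}"
  unfolding in_cl1 by blast

lemma key_cl:
  assumes "\<forall>n. \<exists>k\<ge>n. z \<in> U k" "\<forall>W. openin X W \<and> a \<in> W \<longrightarrow> (\<exists>j. \<forall>k\<ge>j. U k \<subseteq> W)"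
    "a \<in> topspace X"
  shows "a \<in> X closure_of {z}"
  unfolding in_cl1
proof (intro conjI allI impI)
  show "a \<in> topspace X" by fact
  fix W assume "openin X W \<and> a \<in> W"
  then obtain j where "\<forall>k\<ge>j. U k \<subseteq> W" using assms(2) by blast
  moreover obtain k where "k \<ge> j" "z \<in> U k" using assms(1) by blast
  ultimately show "z \<in> W" by blast
qed

lemma wf_seq:
  assumes wf: "well_filtered X" and cA: "closedin X A"
    and cs: "\<And>n. compact_saturated_in X (L n)" and dec: "\<And>n. L (Suc n) \<subseteq> L n"
    and ne: "\<And>n. L n \<inter> A \<noteq> {}"
  shows "(\<Inter>(range L)) \<inter> A \<noteq> {}"
proof
  assume E: "\<Inter>(range L) \<inter> A = {}"
  have anti: "m \<ge> n \<Longrightarrow> L m \<subseteq> L n" for m n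
    using lift_Suc_antimono_le[of L] dec by blast
  have ff: "filtered_family (range L)"
    unfolding filtered_family_def
  proof (intro conjI ballI)
    show "range L \<noteq> {}" by simp
    fix F1 F2 assume "F1 \<in> range L" "F2 \<in> range L"
    then obtain i j where "F1 = L i" "F2 = L j" by blast
    then show "\<exists>F3\<in>range L. F3 \<subseteq> F1 \<inter> F2"
      using anti[of i "max i j"] anti[of j "max i j"] by auto
  qed
  have "L 0 \<subseteq> topspace X" using cs[of 0]
    by (simp add: compact_saturated_in_def saturated_in_def)
  then have "\<Inter>(range L) \<subseteq> topspace X - A" using E by blast
  moreover have "openin X (topspace X - A)" using cA by (simp add: closedin_def)
  ultimately obtain F where "F \<in> range L" "F \<subseteq> topspace X - A"
    using wf[unfolded well_filtered_def, rule_format, of "range L" "topspace X - A"] ff cs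
    by blast
  then show False using ne by blast
qed

lemma directed:
  assumes wf: "well_filtered X" and coh: "coherent_space X" and fc: "first_countable X"
    and irr: "irreducible_closed X A" and aA: "a \<in> A" and bA: "b \<in> A"
  shows "\<exists>z\<in>A. a \<in> X closure_of {z} \<and> b \<in> X closure_of {z}"
proof -
  have cA: "closedin X A" using irr by (simp add: irreducible_closed_def)
  then have At: "A \<subseteq> topspace X" by (simp add: closedin_subset)
  have aT: "a \<in> topspace X" and bT: "b \<in> topspace X" using aA bA At by auto
  obtain Ua :: "nat \<Rightarrow> 'a set" where UaO: "\<And>n. openin X (Ua n)" and UaA: "\<And>n. a \<in> Ua n"
    and UaW: "\<And>W. openin X W \<Longrightarrow> a \<in> W \<Longrightarrow> \<exists>j. \<forall>k\<ge>j. Ua k \<subseteq> W"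
  proof (rule fc_base[OF fc aT])
    fix U :: "nat \<Rightarrow> 'a set"
    assume H1: "\<And>n. openin X (U n)" and H2: "\<And>n. a \<in> U n"
      and H3: "\<And>W. openin X W \<Longrightarrow> a \<in> W \<Longrightarrow> \<exists>j. \<forall>k\<ge>j. U k \<subseteq> W"
    show thesis by (rule that[of U, OF H1 H2 H3])
  qed
  have Ua: "\<forall>n. openin X (Ua n) \<and> a \<in> Ua n"
    "\<forall>W. openin X W \<and> a \<in> W \<longrightarrow> (\<exists>j. \<forall>k\<ge>j. Ua k \<subseteq> W)"
    using UaO UaA UaW by auto
  obtain Ub :: "nat \<Rightarrow> 'a set" where UbO: "\<And>n. openin X (Ub n)" and UbA: "\<And>n. b \<in> Ub n"
    and UbW: "\<And>W. openin X W \<Longrightarrow> b \<in> W \<Longrightarrow> \<exists>j. \<forall>k\<ge>j. Ub k \<subseteq> W"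
  proof (rule fc_base[OF fc bT])
    fix U :: "nat \<Rightarrow> 'a set"
    assume H1: "\<And>n. openin X (U n)" and H2: "\<And>n. b \<in> U n"
      and H3: "\<And>W. openin X W \<Longrightarrow> b \<in> W \<Longrightarrow> \<exists>j. \<forall>k\<ge>j. U k \<subseteq> W"
    show thesis by (rule that[of U, OF H1 H2 H3])
  qed
  have Ub: "\<forall>n. openin X (Ub n) \<and> b \<in> Ub n"
    "\<forall>W. openin X W \<and> b \<in> W \<longrightarrow> (\<exists>j. \<forall>k\<ge>j. Ub k \<subseteq> W)"
    using UbO UbA UbW by auto
  have "\<exists>t. t \<in> A \<and> t \<in> Ua k \<and> t \<in> Ub k" for k
  proof (rule ccontr)
    assume "\<not> ?thesis"
    then have "A \<subseteq> (topspace X - Ua k) \<union> (topspace X - Ub k)" using At by blast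
    moreover have "closedin X (topspace X - Ua k)" "closedin X (topspace X - Ub k)"
      using Ua(1) Ub(1) by auto
    ultimately have "A \<subseteq> topspace X - Ua k \<or> A \<subseteq> topspace X - Ub k"
      using irr unfolding irreducible_closed_def by blast
    moreover have "a \<in> Ua k" "b \<in> Ub k" using Ua(1) Ub(1) by auto
    ultimately show False using aA bA by blast
  qed
  then obtain s where s: "\<And>k. s k \<in> A \<and> s k \<in> Ua k \<and> s k \<in> Ub k" by metis
  have st: "s k \<in> topspace X" for k using s At by blast
  have conva: "\<exists>N. \<forall>k\<ge>N. s k \<in> W" if "openin X W" "a \<in> W" for W
  proof -
    have "\<exists>j. \<forall>k\<ge>j. Ua k \<subseteq> W" using Ua(2) that by simp
    then obtain j where "\<forall>k\<ge>j. Ua k \<subseteq> W" ..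
    then have "\<forall>k\<ge>j. s k \<in> W" using s by blast
    then show ?thesis by blast
  qed
  have convb: "\<exists>N. \<forall>k\<ge>N. s k \<in> W" if "openin X W" "b \<in> W" for W
  proof -
    have "\<exists>j. \<forall>k\<ge>j. Ub k \<subseteq> W" using Ub(2) that by simp
    then obtain j where "\<forall>k\<ge>j. Ub k \<subseteq> W" ..
    then have "\<forall>k\<ge>j. s k \<in> W" using s by blast
    then show ?thesis by blast
  qed
  define L where "L n = upc X (insert a (s ` {n..})) \<inter> upc X (insert b (s ` {n..}))" for n
  have csa: "compact_saturated_in X (upc X (insert a (s ` {n..})))" for n
    by (rule upc_cs, rule conv_compact[OF aT st conva])
  have csb: "compact_saturated_in X (upc X (insert b (s ` {n..})))" for n
    by (rule upc_cs, rule conv_compact[OF bT st convb])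
  have csL: "compact_saturated_in X (L n)" for n
  proof -
    have c: "compactin X (L n)"
      using coh csa[of n] csb[of n] unfolding coherent_space_def L_def by blast
    have "saturated_in X (L n)" unfolding L_def using csa[of n] csb[of n]
      by (intro sat_Int) (auto simp: compact_saturated_in_def)
    then show ?thesis using c by (simp add: compact_saturated_in_def)
  qed
  have decL: "L (Suc n) \<subseteq> L n" for n
    unfolding L_def by (intro Int_mono upc_mono insert_mono image_mono) auto
  have neL: "L n \<inter> A \<noteq> {}" for n
  proof -
    have "s n \<in> L n" unfolding L_def by (intro IntI self_upc) (auto simp: st)
    then show ?thesis using s by blast
  qed
  obtain z where z: "z \<in> A" "\<And>n. z \<in> L n"
    using wf_seq[of X A L, OF wf cA csL decL neL] by blast
  have za: "a \<in> X closure_of {z}"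
  proof (rule ccontr)
    assume na: "a \<notin> X closure_of {z}"
    have "\<forall>n. \<exists>k\<ge>n. z \<in> Ua k"
    proof
      fix n
      have "z \<in> upc X (insert a (s ` {n..}))" using z(2)[of n] by (simp add: L_def)
      then obtain w where w: "w \<in> insert a (s ` {n..})" "w \<in> X closure_of {z}"
        by (auto simp: upc_def)
      then obtain k where "k \<ge> n" "w = s k" using na by auto
      moreover have "s k \<in> Ua k" "openin X (Ua k)" using s Ua(1) by auto
      ultimately have "z \<in> Ua k" using w(2) unfolding in_cl1 by metis
      then show "\<exists>k\<ge>n. z \<in> Ua k" using \<open>k \<ge> n\<close> by blast
    qed
    then have "a \<in> X closure_of {z}" by (rule key_cl[OF _ Ua(2) aT])
    then show False using na by blast
  qed
  have zb: "b \<in> X closure_of {z}"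
  proof (rule ccontr)
    assume na: "b \<notin> X closure_of {z}"
    have "\<forall>n. \<exists>k\<ge>n. z \<in> Ub k"
    proof
      fix n
      have "z \<in> upc X (insert b (s ` {n..}))" using z(2)[of n] by (simp add: L_def)
      then obtain w where w: "w \<in> insert b (s ` {n..})" "w \<in> X closure_of {z}"
        by (auto simp: upc_def)
      then obtain k where "k \<ge> n" "w = s k" using na by auto
      moreover have "s k \<in> Ub k" "openin X (Ub k)" using s Ub(1) by auto
      ultimately have "z \<in> Ub k" using w(2) unfolding in_cl1 by metis
      then show "\<exists>k\<ge>n. z \<in> Ub k" using \<open>k \<ge> n\<close> by blast
    qed
    then have "b \<in> X closure_of {z}" by (rule key_cl[OF _ Ub(2) bT])
    then show False using na by blast
  qed
  show ?thesis using z(1) za zb by blast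
qed

lemma upc_sing_mono: "a \<in> X closure_of {z} \<Longrightarrow> upc X {z} \<subseteq> upc X {a}"
  unfolding upc_def by (auto intro: cl_trans)

lemma upc_sing_iff: "z \<in> upc X {a} \<longleftrightarrow> z \<in> topspace X \<and> a \<in> X closure_of {z}"
  unfolding upc_def by auto

theorem corollary3p13:
  fixes X :: "'a topology"
  assumes "t0_space X"
    and "well_filtered X"
    and "coherent_space X"
    and "first_countable X"
  shows "sober_space X"
  unfolding sober_space_def
proof (intro conjI allI impI)
  show "t0_space X" by fact
  fix A assume irr: "irreducible_closed X A"
  have cA: "closedin X A" and Ane: "A \<noteq> {}" using irr by (auto simp: irreducible_closed_def)
  then have At: "A \<subseteq> topspace X" by (simp add: closedin_subset)
  define F where "F = (\<lambda>a. upc X {a}) ` A"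
  have csF: "\<forall>K\<in>F. compact_saturated_in X K"
    unfolding F_def using At by (auto intro!: upc_cs compactin_sing[THEN iffD2])
  have ff: "filtered_family F"
    unfolding filtered_family_def
  proof (intro conjI ballI)
    show "F \<noteq> {}" using Ane by (simp add: F_def)
    fix F1 F2 assume "F1 \<in> F" "F2 \<in> F"
    then obtain a b where ab: "a \<in> A" "b \<in> A" "F1 = upc X {a}" "F2 = upc X {b}"
      by (auto simp: F_def)
    then obtain z where z: "z \<in> A" "a \<in> X closure_of {z}" "b \<in> X closure_of {z}"
      using directed[OF assms(2,3,4) irr] by blast
    have "upc X {z} \<subseteq> F1 \<inter> F2"
      unfolding ab using upc_sing_mono[OF z(2)] upc_sing_mono[OF z(3)] by blast
    moreover have "upc X {z} \<in> F" using z by (simp add: F_def)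
    ultimately show "\<exists>F3\<in>F. F3 \<subseteq> F1 \<inter> F2" by blast
  qed
  have "\<Inter>F \<inter> A \<noteq> {}"
  proof
    assume E: "\<Inter>F \<inter> A = {}"
    obtain a0 where "a0 \<in> A" using Ane by blast
    then have "upc X {a0} \<in> F" unfolding F_def by blast
    then have "\<Inter>F \<subseteq> upc X {a0}" by (rule Inter_lower)
    moreover have "upc X {a0} \<subseteq> topspace X" by (auto simp: upc_def)
    ultimately have "\<Inter>F \<subseteq> topspace X" by blast
    then have "\<Inter>F \<subseteq> topspace X - A" using E by blast
    moreover have "openin X (topspace X - A)" using cA by (simp add: closedin_def)
    ultimately obtain K where "K \<in> F" "K \<subseteq> topspace X - A"
      using assms(2)[unfolded well_filtered_def, rule_format, of F "topspace X - A"] ff csF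
      by blast
    then obtain a where "a \<in> A" "upc X {a} \<subseteq> topspace X - A" by (auto simp: F_def)
    moreover have "a \<in> upc X {a}" using \<open>a \<in> A\<close> At by (intro self_upc) auto
    ultimately show False by blast
  qed
  then obtain z where z1: "z \<in> A" and zF: "z \<in> \<Inter>F" by blast
  have z2: "z \<in> upc X {a}" if "a \<in> A" for a
  proof -
    have "upc X {a} \<in> F" using that unfolding F_def by blast
    then show ?thesis using zF by blast
  qed
  have z: "z \<in> A" "\<And>a. a \<in> A \<Longrightarrow> z \<in> upc X {a}" using z1 z2 by auto
  have "A \<subseteq> X closure_of {z}"
  proof
    fix a assume "a \<in> A"
    then show "a \<in> X closure_of {z}" using z(2)[of a] by (simp add: upc_sing_iff)
  qed
  moreover have "X closure_of {z} \<subseteq> A"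
    using z(1) cA by (simp add: closure_of_minimal)
  ultimately show "\<exists>x\<in>topspace X. A = X closure_of {x}" using z(1) At by blast
qed

end
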